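(* For every $z\in\mathbb{D}^*$, $\Gamma_z=\{a-b: a,b\in\Lambda_z\}$.
   Context: For $z\in\mathbb{D}^*=\{0<|z|<1\}$, $f(x)=zx$, $g(x)=z(x-1)+1$, and $\Lambda_z$ is the unique nonempty compact subset of $\mathbb{C}$ with $\Lambda_z=f(\Lambda_z)\cup g(\Lambda_z)$. $\Gamma_z$ is the unique nonempty compact subset of $\mathbb{C}$ that equals the union of its images under the three maps $x\mapsto z(x+1)-1$, $x\mapsto zx$, $x\mapsto z(x-1)+1$. *)

theory Defs
  imports "HOL-Analysis.Analysis"
begin

definition Lambda_set :: "complex \<Rightarrow> complex set" where
  "Lambda_set z = (THE K. K \<noteq> {} \<and> compact K \<and>
      K = (\<lambda>x. z * x) ` K \<union> (\<lambda>x. z * (x - 1) + 1) ` K)"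

definition Gamma_set :: "complex \<Rightarrow> complex set" where
  "Gamma_set z = (THE K. K \<noteq> {} \<and> compact K \<and>
      K = (\<lambda>x. z * (x + 1) - 1) ` K \<union> (\<lambda>x. z * x) ` K \<union> (\<lambda>x. z * (x - 1) + 1) ` K)"

end

theory Submission
  imports Defs
begin

definition Att :: "complex \<Rightarrow> complex set \<Rightarrow> complex set \<Rightarrow> bool" where
  "Att z C K \<longleftrightarrow> K \<noteq> {} \<and> compact K \<and> K = (\<Union>c\<in>C. (\<lambda>x. z*x+c) ` K)"

lemma half_uniq:
  fixes z :: complex
  assumes z1: "norm z < 1" and K: "Att z C K" and L: "Att z C L"
  shows "K \<subseteq> L"
proof -
  have Kne: "K \<noteq> {}" and Kc: "compact K" and Ke: "K = (\<Union>c\<in>C. (\<lambda>x. z*x+c) ` K)"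
    using K by (auto simp: Att_def)
  have Lne: "L \<noteq> {}" and Lc: "compact L" and Le: "L = (\<Union>c\<in>C. (\<lambda>x. z*x+c) ` L)"
    using L by (auto simp: Att_def)
  obtain l0 where l0: "l0 \<in> L" using Lne by auto
  obtain M where M: "\<And>x. x \<in> K \<Longrightarrow> norm x \<le> M"
    using compact_imp_bounded[OF Kc] by (auto simp: bounded_iff)
  define d where "d = Sup ((\<lambda>x. infdist x L) ` K)"
  have bdd: "bdd_above ((\<lambda>x. infdist x L) ` K)"
  proof (rule bdd_aboveI2)
    fix x assume "x \<in> K"
    have "infdist x L \<le> dist x l0" using l0 by (rule infdist_le)
    also have "\<dots> \<le> norm x + norm l0" by (simp add: dist_norm norm_triangle_ineq4)
    also have "\<dots> \<le> M + norm l0" using M[OF \<open>x\<in>K\<close>] by simp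
    finally show "infdist x L \<le> M + norm l0" .
  qed
  have up: "infdist x L \<le> d" if "x \<in> K" for x
    unfolding d_def using bdd that by (intro cSup_upper) auto
  have step: "infdist x L \<le> norm z * d" if x: "x \<in> K" for x
  proof -
    from x Ke obtain c y where c: "c \<in> C" and y: "y \<in> K" and xe: "x = z*y+c" by blast
    obtain w where w: "w \<in> L" "infdist y L = dist y w"
      using infdist_attains_inf[OF compact_imp_closed[OF Lc] Lne] by metis
    have "z*w+c \<in> L" using Le c w(1) by blast
    hence "infdist x L \<le> dist x (z*w+c)" by (rule infdist_le)
    also have "dist x (z*w+c) = norm z * dist y w"
      by (simp add: xe dist_norm right_diff_distrib[symmetric] norm_mult)
    also have "\<dots> \<le> norm z * d" using w(2) up[OF y] by (simp add: mult_left_mono)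
    finally show ?thesis .
  qed
  have "d \<le> norm z * d"
    unfolding d_def[of] using Kne step by (subst d_def[symmetric]) (auto intro!: cSup_least)
  moreover have "0 \<le> d" using Kne up infdist_nonneg by (meson all_not_in_conv order_trans)
  ultimately have d0: "d \<le> 0"
    using z1 by (metis le_less_trans less_le_not_le mult_le_cancel_right1 norm_ge_zero not_le)
  show ?thesis
  proof
    fix x assume x: "x \<in> K"
    have "infdist x L = 0" using up[OF x] d0 infdist_nonneg[of x L] by linarith
    thus "x \<in> L" using in_closed_iff_infdist_zero[OF compact_imp_closed[OF Lc] Lne] by simp
  qed
qed

lemma uniq: "norm (z::complex) < 1 \<Longrightarrow> Att z C K \<Longrightarrow> Att z C L \<Longrightarrow> K = L"
  by (meson half_uniq subset_antisym)

lemma exist: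
  fixes z :: complex
  assumes z0: "z \<noteq> 0" and z1: "norm z < 1" and fin: "finite C" and Cne: "C \<noteq> {}"
  shows "\<exists>K. Att z C K"
proof -
  define T where "T = (\<lambda>K. \<Union>c\<in>C. (\<lambda>x. z*x+c) ` K)"
  define R where "R = (\<Sum>c\<in>C. norm c) / (1 - norm z)"
  have R0: "0 \<le> R" unfolding R_def using z1 by (auto intro!: divide_nonneg_pos sum_nonneg)
  have TB: "T (cball 0 R) \<subseteq> cball 0 R"
  proof
    fix x assume "x \<in> T (cball 0 R)"
    then obtain c y where c: "c \<in> C" and y: "norm y \<le> R" and xe: "x = z*y+c"
      unfolding T_def by auto
    have "norm c \<le> (\<Sum>c\<in>C. norm c)" using c fin by (intro member_le_sum) auto
    also have "\<dots> = R * (1 - norm z)" unfolding R_def using z1 by simp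
    finally have nc: "norm c \<le> R - R * norm z" by (simp add: algebra_simps)
    have "norm x \<le> norm z * norm y + norm c" unfolding xe
      by (metis norm_mult norm_triangle_ineq)
    also have "\<dots> \<le> norm z * R + norm c" using y by (simp add: mult_left_mono)
    finally show "x \<in> cball 0 R" using nc by (simp add: algebra_simps)
  qed
  have Tmono: "A \<subseteq> B \<Longrightarrow> T A \<subseteq> T B" for A B unfolding T_def by auto
  define S where "S n = (T ^^ n) (cball 0 R)" for n
  have Sdec: "S (Suc n) \<subseteq> S n" for n
  proof (induction n)
    case 0 then show ?case using TB by (simp add: S_def)
  next
    case (Suc n) then show ?case using Tmono by (simp add: S_def)
  qed
  have Smono: "m \<le> n \<Longrightarrow> S n \<subseteq> S m" for m n
    using lift_Suc_antimono_le[of S, OF Sdec] by blast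
  have Tc: "compact A \<Longrightarrow> compact (T A)" for A
    unfolding T_def using fin
    by (intro compact_UN) (auto intro!: compact_continuous_image continuous_intros)
  have Tne: "A \<noteq> {} \<Longrightarrow> T A \<noteq> {}" for A unfolding T_def using Cne by auto
  have Sc: "compact (S n)" and Sne: "S n \<noteq> {}" for n
    using R0 by (induction n) (auto simp: S_def Tc Tne)
  define K where "K = \<Inter>(range S)"
  have Kne: "K \<noteq> {}" unfolding K_def using Sc Sne Smono by (intro compact_nest) auto
  have Kc: "compact K" unfolding K_def using Sc
    by (intro compact_Inter) auto
  have sub1: "T K \<subseteq> K"
  proof -
    have "T K \<subseteq> S n" for n
    proof -
      have "T K \<subseteq> T (S n)" by (rule Tmono) (auto simp: K_def)
      also have "\<dots> = S (Suc n)" by (simp add: S_def)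
      also have "\<dots> \<subseteq> S n" by (rule Sdec)
      finally show ?thesis .
    qed
    thus ?thesis unfolding K_def by auto
  qed
  have sub2: "K \<subseteq> T K"
  proof
    fix x assume xK: "x \<in> K"
    have ex: "\<exists>c\<in>C. (x - c)/z \<in> S n" for n
    proof -
      have "x \<in> S (Suc n)" using xK K_def by auto
      hence "x \<in> T (S n)" by (simp add: S_def)
      then obtain c y where "c \<in> C" "y \<in> S n" "x = z*y+c" unfolding T_def by auto
      thus ?thesis using z0 by (intro bexI[of _ c]) auto
    qed
    have "\<exists>c\<in>C. \<forall>n. (x - c)/z \<in> S n"
    proof (rule ccontr)
      assume "\<not> ?thesis"
      hence "\<forall>c\<in>C. \<exists>n. (x - c)/z \<notin> S n" by auto
      then obtain N where N: "\<And>c. c \<in> C \<Longrightarrow> (x - c)/z \<notin> S (N c)" by metis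
      define M where "M = Max (N ` C)"
      have "(x - c)/z \<notin> S M" if "c \<in> C" for c
        using N[OF that] Smono[of "N c" M] fin that unfolding M_def by auto
      with ex[of M] show False by auto
    qed
    then obtain c where c: "c \<in> C" and y: "\<And>n. (x - c)/z \<in> S n" by auto
    have "(x-c)/z \<in> K" using y K_def by auto
    moreover have "x = z*((x-c)/z)+c" using z0 by simp
    ultimately show "x \<in> T K" unfolding T_def using c by blast
  qed
  have "Att z C K" unfolding Att_def using Kne Kc sub1 sub2 T_def by auto
  thus ?thesis by blast
qed


lemma img_eq: "(\<lambda>x. f x) = (\<lambda>x. g x) \<Longrightarrow> f ` K = g ` K" by simp

lemma Lam_iff:
  fixes z :: complex
  shows "(K \<noteq> {} \<and> compact K \<and> K = (\<lambda>x. z * x) ` K \<union> (\<lambda>x. z * (x - 1) + 1) ` K)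
     \<longleftrightarrow> Att z {0, 1 - z} K"
proof -
  have e: "(\<lambda>x. z * (x - 1) + 1) = (\<lambda>x. z*x + (1-z))" by (auto simp: algebra_simps)
  show ?thesis unfolding e Att_def by auto
qed

lemma Gam_iff:
  fixes z :: complex
  shows "(K \<noteq> {} \<and> compact K \<and>
      K = (\<lambda>x. z * (x + 1) - 1) ` K \<union> (\<lambda>x. z * x) ` K \<union> (\<lambda>x. z * (x - 1) + 1) ` K)
     \<longleftrightarrow> Att z {z - 1, 0, 1 - z} K"
proof -
  have e1: "(\<lambda>x. z * (x - 1) + 1) = (\<lambda>x. z*x + (1-z))" by (auto simp: algebra_simps)
  have e2: "(\<lambda>x. z * (x + 1) - 1) = (\<lambda>x. z*x + (z-1))" by (auto simp: algebra_simps)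
  show ?thesis unfolding e1 e2 Att_def by auto
qed

theorem lemma6p1p1:
  fixes z :: complex
  assumes "0 < norm z" and "norm z < 1"
  shows "Gamma_set z = {a - b | a b. a \<in> Lambda_set z \<and> b \<in> Lambda_set z}"
proof -
  have z0: "z \<noteq> 0" using assms by auto
  obtain K0 where K0: "Att z {0, 1 - z} K0" using exist[OF z0 assms(2), of "{0, 1 - z}"] by auto
  have LA: "Att z {0, 1 - z} (Lambda_set z)"
    unfolding Lambda_set_def Lam_iff
    using K0 uniq[OF assms(2) _ K0] by (rule theI)
  define L where "L = Lambda_set z"
  have LA': "L \<noteq> {} \<and> compact L \<and> L = (\<Union>c\<in>{0,1-z}. (\<lambda>x. z*x+c) ` L)"
    using LA unfolding Att_def L_def .
  have Lne: "L \<noteq> {}" using LA' by (rule conjunct1)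
  have Lc: "compact L" using LA' by (rule conjunct1[OF conjunct2])
  have Le: "L = (\<Union>c\<in>{0,1-z}. (\<lambda>x. z*x+c) ` L)" using LA' by (rule conjunct2[OF conjunct2])
  have Ldec: "\<exists>a'. a' \<in> L \<and> (a = z*a' \<or> a = z*a' + (1-z))" if "a \<in> L" for a
  proof -
    have "a \<in> (\<Union>c\<in>{0,1-z}. (\<lambda>x. z*x+c) ` L)" using that by (subst (asm) Le)
    thus ?thesis by auto
  qed
  have Lcl: "z*a \<in> L" "z*a + (1-z) \<in> L" if "a \<in> L" for a
  proof -
    have "z*a \<in> (\<Union>c\<in>{0,1-z}. (\<lambda>x. z*x+c) ` L)" "z*a + (1-z) \<in> (\<Union>c\<in>{0,1-z}. (\<lambda>x. z*x+c) ` L)"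
      using that by auto
    moreover have "(\<Union>c\<in>{0,1-z}. (\<lambda>x. z*x+c) ` L) \<subseteq> L" using Le by (rule equalityD2)
    ultimately show "z*a \<in> L" "z*a + (1-z) \<in> L" by blast+
  qed
  define D where "D = {a - b | a b. a \<in> L \<and> b \<in> L}"
  have DA: "Att z {z - 1, 0, 1 - z} D"
    unfolding Att_def
  proof (intro conjI)
    show "D \<noteq> {}" using Lne unfolding D_def by auto
    show "compact D" unfolding D_def by (rule compact_differences[OF Lc Lc])
    show "D = (\<Union>c\<in>{z - 1, 0, 1 - z}. (\<lambda>x. z*x+c) ` D)"
    proof
      show "D \<subseteq> (\<Union>c\<in>{z - 1, 0, 1 - z}. (\<lambda>x. z*x+c) ` D)"
      proof
        fix d assume "d \<in> D"
        then obtain a b where a: "a \<in> L" and b: "b \<in> L" and de: "d = a - b" unfolding D_def by auto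
        from Ldec[OF a] obtain a' where a': "a' \<in> L" "a = z*a' \<or> a = z*a' + (1-z)" by blast
        from Ldec[OF b] obtain b' where b': "b' \<in> L" "b = z*b' \<or> b = z*b' + (1-z)" by blast
        have dd: "a' - b' \<in> D" unfolding D_def using a'(1) b'(1) by auto
        have e1: "z*a' - z*b' = z*(a'-b') + 0" by (simp add: algebra_simps)
        have e2: "z*a' + (1-z) - (z*b' + (1-z)) = z*(a'-b') + 0" by (simp add: algebra_simps)
        have e3: "z*a' - (z*b' + (1-z)) = z*(a'-b') + (z-1)" by (simp add: algebra_simps)
        have e4: "z*a' + (1-z) - z*b' = z*(a'-b') + (1-z)" by (simp add: algebra_simps)
        have "d \<in> {z*(a'-b') + (z-1), z*(a'-b') + 0, z*(a'-b') + (1-z)}"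
          using a'(2) b'(2)
        proof (elim disjE)
          assume ha: "a = z*a'" and hb: "b = z*b'"
          show ?thesis unfolding de ha hb e1 by simp
        next
          assume ha: "a = z*a'" and hb: "b = z*b' + (1-z)"
          show ?thesis unfolding de ha hb e3 by simp
        next
          assume ha: "a = z*a' + (1-z)" and hb: "b = z*b'"
          show ?thesis unfolding de ha hb e4 by simp
        next
          assume ha: "a = z*a' + (1-z)" and hb: "b = z*b' + (1-z)"
          show ?thesis unfolding de ha hb e2 by simp
        qed
        thus "d \<in> (\<Union>c\<in>{z - 1, 0, 1 - z}. (\<lambda>x. z*x+c) ` D)" using dd by blast
      qed
    next
      show "(\<Union>c\<in>{z - 1, 0, 1 - z}. (\<lambda>x. z*x+c) ` D) \<subseteq> D"
      proof clarify
        fix c d assume c: "c \<in> {z - 1, 0, 1 - z}" and "d \<in> D"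
        then obtain a b where a: "a \<in> L" and b: "b \<in> L" and de: "d = a - b" unfolding D_def by auto
        have fa: "z*a \<in> L" "z*a + (1-z) \<in> L" and fb: "z*b \<in> L" "z*b + (1-z) \<in> L"
          using Lcl a b by blast+
        have "c = z - 1 \<Longrightarrow> z*d + c = z*a - (z*b + (1-z))" unfolding de by (simp add: algebra_simps)
        moreover have "c = 0 \<Longrightarrow> z*d + c = z*a - z*b" unfolding de by (simp add: algebra_simps)
        moreover have "c = 1 - z \<Longrightarrow> z*d + c = (z*a + (1-z)) - z*b" unfolding de by (simp add: algebra_simps)
        ultimately show "z*d + c \<in> D" using c fa fb unfolding D_def by blast
      qed
    qed
  qed
  have "Gamma_set z = D"
    unfolding Gamma_set_def Gam_iff
    using DA uniq[OF assms(2) _ DA] by (rule the_equality)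
  thus ?thesis unfolding D_def L_def .
qed

end
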